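(* Let $s$ be a scoring vector with all entries positive, let $k=(k_1,\ldots,k_n)$ be a vector of non-negative integers with $\sum_i k_i=m$, let $c_i=\sum_{l<i}k_l$, $k_{\min}=\min_i k_i$, and let $P$ be any preference profile. Then $$\mathcal{P}^u_{AtoP}\le\frac{\sum_{i=1}^n\sum_{j=1}^{k_i}s_j}{\sum_{j=1}^m s_j},\qquad \mathcal{P}^e_{AtoP}\le\frac{\sum_{j=1}^{k_{\min}}s_j}{\min_{i\in[n]}\sum_{j=c_i+1}^{c_i+k_i}s_j},\qquad \mathcal{P}^n_{AtoP}\le\frac{\prod_{i=1}^n\sum_{j=1}^{k_i}s_j}{\prod_{i=1}^n\sum_{j=c_i+1}^{c_i+k_i}s_j}.$$
   Context: There are $n$ agents $a_1,\ldots,a_n$ and $m$ items. A preference profile $P=(\succ_{a_1},\ldots,\succ_{a_n})$ assigns to each agent a strict ranking of the items. A scoring vector $s=(s_1,\ldots,s_m)$ satisfies $s_1\ge\cdots\ge s_m$; an agent's value for her $j$-th preferred item is $s_j$, utilities are additive. Given $k$, agent $a_1$ first picks $k_1$ items, then $a_2$ picks $k_2$ of the remaining ones, etc., each greedily picking her most preferred remaining items; $U^k_P(a)$ is the total score $a$ receives. $SW^u_P(k)=\sum_a U^k_P(a)$, $SW^e_P(k)=\min_a U^k_P(a)$, $SW^n_P(k)=\prod_a U^k_P(a)$. For a permutation $\pi$ of $[n]$, $P_\pi$ is the profile obtained from $P$ by permuting the agents' rankings according to $\pi$. The price of assignment of agents to positions is $\mathcal{P}^x_{AtoP}=\max_{\pi}SW^x_{P_\pi}(k)/\min_{\pi}SW^x_{P_\pi}(k)$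 for $x\in\{u,e,n\}$, with $\pi$ ranging over all permutations of $[n]$. *)

theory Defs
  imports Complex_Main "HOL-Combinatorics.Permutations"
begin

(* Agents are 0..<n, items are 0..<m. A preference profile P maps agent i to a list
   (a permutation of [0..<m]); the head is the most preferred item.
   The scoring vector is s :: nat => real, 0-indexed: s 0 = s_1, ..., s (m-1) = s_m. *)

definition valid_profile :: "nat \<Rightarrow> nat \<Rightarrow> (nat \<Rightarrow> nat list) \<Rightarrow> bool" where
  "valid_profile n m P \<longleftrightarrow> (\<forall>i<n. distinct (P i) \<and> set (P i) = {0..<m})"

definition scoring_vector :: "nat \<Rightarrow> (nat \<Rightarrow> real) \<Rightarrow> bool" where
  "scoring_vector m s \<longleftrightarrow> (\<forall>i j. i \<le> j \<longrightarrow> j < m \<longrightarrow> s j \<le> s i)"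

definition pos :: "nat list \<Rightarrow> nat \<Rightarrow> nat" where
  "pos p x = (LEAST j. j < length p \<and> p ! j = x)"

fun taken :: "(nat \<Rightarrow> nat list) \<Rightarrow> (nat \<Rightarrow> nat) \<Rightarrow> nat \<Rightarrow> nat set" where
  "taken P k 0 = {}"
| "taken P k (Suc i) = taken P k i \<union> set (take (k i) (filter (\<lambda>x. x \<notin> taken P k i) (P i)))"

definition picks :: "(nat \<Rightarrow> nat list) \<Rightarrow> (nat \<Rightarrow> nat) \<Rightarrow> nat \<Rightarrow> nat list" where
  "picks P k i = take (k i) (filter (\<lambda>x. x \<notin> taken P k i) (P i))"

definition util :: "(nat \<Rightarrow> real) \<Rightarrow> (nat \<Rightarrow> nat list) \<Rightarrow> (nat \<Rightarrow> nat) \<Rightarrow> nat \<Rightarrow> real" where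
  "util s P k i = (\<Sum>x\<in>set (picks P k i). s (pos (P i) x))"

definition SW_u :: "nat \<Rightarrow> (nat \<Rightarrow> real) \<Rightarrow> (nat \<Rightarrow> nat list) \<Rightarrow> (nat \<Rightarrow> nat) \<Rightarrow> real" where
  "SW_u n s P k = (\<Sum>i<n. util s P k i)"

definition SW_e :: "nat \<Rightarrow> (nat \<Rightarrow> real) \<Rightarrow> (nat \<Rightarrow> nat list) \<Rightarrow> (nat \<Rightarrow> nat) \<Rightarrow> real" where
  "SW_e n s P k = Min ((\<lambda>i. util s P k i) ` {..<n})"

definition SW_n :: "nat \<Rightarrow> (nat \<Rightarrow> real) \<Rightarrow> (nat \<Rightarrow> nat list) \<Rightarrow> (nat \<Rightarrow> nat) \<Rightarrow> real" where
  "SW_n n s P k = (\<Prod>i<n. util s P k i)"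

definition price_AtoP ::
  "(nat \<Rightarrow> (nat \<Rightarrow> real) \<Rightarrow> (nat \<Rightarrow> nat list) \<Rightarrow> (nat \<Rightarrow> nat) \<Rightarrow> real)
    \<Rightarrow> nat \<Rightarrow> (nat \<Rightarrow> real) \<Rightarrow> (nat \<Rightarrow> nat list) \<Rightarrow> (nat \<Rightarrow> nat) \<Rightarrow> real" where
  "price_AtoP SW n s P k =
     Max {SW n s (P \<circ> \<pi>) k | \<pi>. \<pi> permutes {..<n}} /
     Min {SW n s (P \<circ> \<pi>) k | \<pi>. \<pi> permutes {..<n}}"

definition cpos :: "(nat \<Rightarrow> nat) \<Rightarrow> nat \<Rightarrow> nat" where
  "cpos k i = (\<Sum>l<i. k l)"

end

theory Submission
  imports Defs
begin

lemma upper_sum: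
  assumes sv: "scoring_vector m s"
  shows "finite S \<Longrightarrow> S \<subseteq> {..<m} \<Longrightarrow> (\<Sum>j\<in>S. s j) \<le> (\<Sum>j<card S. s j)"
proof (induction "card S" arbitrary: S)
  case 0
  then show ?case by simp
next
  case (Suc k)
  then have ne: "S \<noteq> {}" by auto
  define a where "a = Max S"
  have aS: "a \<in> S" using ne Suc.prems a_def by simp
  define S' where "S' = S - {a}"
  have cS': "card S' = k" using Suc.hyps(2) aS S'_def Suc.prems by simp
  have sub: "S' \<subseteq> {..<a}" using Suc.prems a_def S'_def
    by (auto, metis Max_ge le_neq_implies_less)
  have ka: "k \<le> a" using card_mono[OF _ sub] cS' by simp
  have am: "a < m" using aS Suc.prems by auto
  have IH: "(\<Sum>j\<in>S'. s j) \<le> (\<Sum>j<k. s j)"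
    using Suc.hyps(1)[of S'] cS' sub am Suc.prems S'_def by auto
  have "(\<Sum>j\<in>S. s j) = s a + (\<Sum>j\<in>S'. s j)"
    using aS Suc.prems S'_def by (simp add: sum.remove)
  also have "\<dots> \<le> s k + (\<Sum>j<k. s j)"
    using IH sv ka am unfolding scoring_vector_def by (simp add: add_mono)
  finally show ?case using Suc.hyps(2)[symmetric] by simp
qed

lemma lower_sum:
  assumes sv: "scoring_vector m s"
  shows "finite S \<Longrightarrow> S \<subseteq> {..<N} \<Longrightarrow> N \<le> m \<Longrightarrow>
     (\<Sum>t<card S. s (N - card S + t)) \<le> (\<Sum>j\<in>S. s j)"
proof (induction "card S" arbitrary: S N)
  case 0
  then show ?case by simp
next
  case (Suc k)
  then have ne: "S \<noteq> {}" by auto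
  define a where "a = Max S"
  have aS: "a \<in> S" using ne Suc.prems a_def by simp
  define S' where "S' = S - {a}"
  have cS': "card S' = k" using Suc.hyps(2) aS S'_def Suc.prems by simp
  have sub: "S' \<subseteq> {..<a}" using Suc.prems a_def S'_def
    by (auto, metis Max_ge le_neq_implies_less)
  have ka: "k \<le> a" using card_mono[OF _ sub] cS' by simp
  have aN: "a < N" using aS Suc.prems by auto
  have kN: "Suc k \<le> N" using card_mono[OF _ Suc.prems(2)] Suc.hyps(2) by simp
  have IH: "(\<Sum>t<k. s (a - k + t)) \<le> (\<Sum>j\<in>S'. s j)"
    using Suc.hyps(1)[of S' a] cS' sub aN Suc.prems S'_def by auto
  have "(\<Sum>t<Suc k. s (N - Suc k + t)) = s (N - 1) + (\<Sum>t<k. s (N - Suc k + t))"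
    using kN by (simp add: Suc_diff_le)
  also have "\<dots> \<le> s a + (\<Sum>t<k. s (a - k + t))"
  proof (rule add_mono)
    show "s (N - 1) \<le> s a" using sv aN Suc.prems unfolding scoring_vector_def by auto
    show "(\<Sum>t<k. s (N - Suc k + t)) \<le> (\<Sum>t<k. s (a - k + t))"
      by (rule sum_mono) (use sv aN ka kN Suc.prems in \<open>auto simp: scoring_vector_def\<close>)
  qed
  also have "\<dots> \<le> s a + (\<Sum>j\<in>S'. s j)" using IH by simp
  also have "\<dots> = (\<Sum>j\<in>S. s j)"
    using aS Suc.prems S'_def by (simp add: sum.remove)
  finally show ?case using Suc.hyps(2)[symmetric] by simp
qed

lemma ivl_shift: "(\<Sum>j\<in>{c..<c+k}. f j) = (\<Sum>t<k. f (c + t :: nat))"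
  by (induction k) auto

lemma take_filter_prefix:
  assumes "distinct zs" "x \<in> set (take k (filter R zs))" "zs = us @ x # vs" "y \<in> set us" "R y"
  shows "y \<in> set (take k (filter R zs))"
proof -
  have Rx: "R x" using assms(2) by (auto dest: in_set_takeD)
  have xu: "x \<notin> set us" using assms(1,3) by auto
  have eq: "filter R zs = filter R us @ x # filter R vs" using assms(3) Rx by simp
  show ?thesis
  proof (cases "length (filter R us) < k")
    case True
    then show ?thesis using eq assms(4,5) by (simp add: take_append)
  next
    case False
    then have "take k (filter R zs) = take k (filter R us)" using eq by simp
    then have "x \<in> set (filter R us)" using assms(2) by (metis in_set_takeD)
    then show ?thesis using xu by simp
  qed
qed

lemma ratio:
  fixes A :: "real set"
  assumes "finite A" "A \<noteq> {}" "\<forall>a\<in>A. L \<le> a \<and> a \<le> U" "0 \<le> L" "L = 0 \<longrightarrow> U \<le> 0"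
  shows "Max A / Min A \<le> U / L"
proof (cases "L = 0")
  case True
  have "Max A \<in> A" using assms by simp
  then have "L \<le> Max A \<and> Max A \<le> U" using assms(3) by blast
  then have "Max A = 0" using assms True by linarith
  then show ?thesis using True by simp
next
  case False
  have mi: "L \<le> Min A" using assms by simp
  have ma: "Max A \<le> U" "0 \<le> Max A" using assms by (simp, meson Max_in order_trans)
  have "Max A / Min A \<le> U / Min A" using ma mi False assms(4) by (simp add: divide_right_mono)
  also have "\<dots> \<le> U / L" using ma mi False assms(4)
    by (intro divide_left_mono) auto
  finally show ?thesis .
qed


lemma cpos_le:
  assumes "i \<le> n" shows "cpos k i \<le> cpos k n"
  unfolding cpos_def using assms by (intro sum_mono2) auto

lemma cpos_Suc: "cpos k (Suc i) = cpos k i + k i"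
  unfolding cpos_def by simp

lemma valid_len:
  assumes "valid_profile n m Q" "i < n"
  shows "distinct (Q i)" "set (Q i) = {0..<m}" "length (Q i) = m"
  using assms distinct_card[of "Q i"] unfolding valid_profile_def by auto

lemma taken_props:
  assumes vp: "valid_profile n m Q" and sk: "(\<Sum>i<n. k i) = m"
  shows "i \<le> n \<Longrightarrow> taken Q k i \<subseteq> {0..<m} \<and> card (taken Q k i) = cpos k i"
proof (induction i)
  case 0
  then show ?case by (simp add: cpos_def)
next
  case (Suc i)
  then have i: "i < n" by simp
  define T where "T = taken Q k i"
  have IH: "T \<subseteq> {0..<m}" "card T = cpos k i" using Suc T_def by auto
  have fT: "finite T" using IH(1) finite_subset by blast
  define F where "F = filter (\<lambda>x. x \<notin> T) (Q i)"
  have dF: "distinct F" using valid_len[OF vp i] F_def by simp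
  have sF: "set F = {0..<m} - T" using valid_len[OF vp i] F_def by auto
  have lF: "length F = m - cpos k i"
    using distinct_card[OF dF] sF IH fT by (simp add: card_Diff_subset)
  have ck: "cpos k i + k i \<le> m"
    using cpos_le[of "Suc i" n k] i sk by (simp add: cpos_Suc cpos_def)
  have lt: "length (take (k i) F) = k i" using lF ck by simp
  have dt: "distinct (take (k i) F)" using dF by simp
  have disj: "T \<inter> set (take (k i) F) = {}" using sF by (auto dest: in_set_takeD)
  have eq: "taken Q k (Suc i) = T \<union> set (take (k i) F)" using T_def F_def by simp
  have "card (taken Q k (Suc i)) = card T + k i"
    using eq card_Un_disjoint[OF fT _ disj] distinct_card[OF dt] lt by simp
  moreover have "taken Q k (Suc i) \<subseteq> {0..<m}" using eq IH sF by (auto dest: in_set_takeD)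
  ultimately show ?case using IH by (simp add: cpos_Suc)
qed


lemma pos_nth:
  assumes "distinct p" "j < length p" shows "pos p (p ! j) = j"
  unfolding pos_def
  by (rule Least_equality) (use assms nth_eq_iff_index_eq in auto)

lemma agent_bounds:
  assumes vp: "valid_profile n m Q" and sk: "(\<Sum>i<n. k i) = m"
    and sv: "scoring_vector m s" and i: "i < n"
  shows "(\<Sum>j\<in>{cpos k i..<cpos k i + k i}. s j) \<le> util s Q k i
       \<and> util s Q k i \<le> (\<Sum>j<k i. s j)"
proof -
  define T where "T = taken Q k i"
  define c where "c = cpos k i"
  have TP: "T \<subseteq> {0..<m}" "card T = c" using taken_props[OF vp sk, of i] i T_def c_def by auto
  have fT: "finite T" using TP(1) finite_subset by blast
  define F where "F = filter (\<lambda>x. x \<notin> T) (Q i)"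
  note V = valid_len[OF vp i]
  have dF: "distinct F" using V F_def by simp
  have sF: "set F = {0..<m} - T" using V F_def by auto
  have lF: "length F = m - c"
    using distinct_card[OF dF] sF TP fT by (simp add: card_Diff_subset)
  have ck: "c + k i \<le> m"
    using cpos_le[of "Suc i" n k] i sk c_def by (simp add: cpos_Suc cpos_def)
  define pk where "pk = take (k i) F"
  have pk_def': "picks Q k i = pk" unfolding picks_def pk_def F_def T_def by simp
  have lt: "length pk = k i" using lF ck pk_def by simp
  have dt: "distinct pk" using dF pk_def by simp
  have spk: "set pk \<subseteq> {0..<m}" using sF pk_def by (auto dest: in_set_takeD)
  define Pos where "Pos = {j. j < m \<and> Q i ! j \<in> set pk}"
  have injQ: "inj_on (\<lambda>j. Q i ! j) {..<m}" using V by (simp add: inj_on_def nth_eq_iff_index_eq)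
  have img: "set pk = (\<lambda>j. Q i ! j) ` Pos"
  proof
    show "set pk \<subseteq> (\<lambda>j. Q i ! j) ` Pos"
    proof
      fix x assume x: "x \<in> set pk"
      then have "x \<in> set (Q i)" using spk V by auto
      then obtain j where "j < length (Q i)" "Q i ! j = x" by (meson in_set_conv_nth)
      then show "x \<in> (\<lambda>j. Q i ! j) ` Pos" using x V Pos_def by auto
    qed
  qed (auto simp: Pos_def)
  have PosS: "Pos \<subseteq> {..<m}" using Pos_def by auto
  have inj2: "inj_on (\<lambda>j. Q i ! j) Pos" using inj_on_subset[OF injQ PosS] .
  have cP: "card Pos = k i"
    using card_image[OF inj2] img distinct_card[OF dt] lt by simp
  have fP: "finite Pos" using PosS finite_subset by blast
  have ut: "util s Q k i = (\<Sum>j\<in>Pos. s j)"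
    unfolding util_def pk_def'
    by (rule sum.reindex_cong[OF inj2 img]) (use V Pos_def pos_nth in auto)
  have up: "(\<Sum>j\<in>Pos. s j) \<le> (\<Sum>j<k i. s j)"
    using upper_sum[OF sv fP PosS] cP by simp
  have PosB: "Pos \<subseteq> {..<c + k i}"
  proof
    fix p assume pP: "p \<in> Pos"
    then have pm: "p < m" and xp: "Q i ! p \<in> set pk" using Pos_def by auto
    have cl: "j \<in> Pos" if "j < p" "Q i ! j \<notin> T" for j
    proof -
      have dec: "Q i = take p (Q i) @ Q i ! p # drop (Suc p) (Q i)"
        using pm V by (simp add: id_take_nth_drop)
      have "Q i ! j \<in> set (take p (Q i))" using that pm V
        by (metis in_set_conv_nth length_take min.absorb2 nat_less_le nth_take order.strict_trans)
      then have "Q i ! j \<in> set pk"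
        using take_filter_prefix[OF V(1) _ dec, of "k i" "\<lambda>x. x \<notin> T"] xp that
        unfolding pk_def F_def by blast
      then show ?thesis using that pm Pos_def by auto
    qed
    define TP where "TP = {j. j < m \<and> Q i ! j \<in> T}"
    have cTP: "card TP \<le> c"
    proof -
      have "inj_on (\<lambda>j. Q i ! j) TP" by (rule inj_on_subset[OF injQ]) (auto simp: TP_def)
      moreover have "(\<lambda>j. Q i ! j) ` TP \<subseteq> T" using TP_def by auto
      ultimately show ?thesis using card_inj_on_le[OF _ _ fT] TP by simp
    qed
    have sub: "{..<p} \<subseteq> (Pos - {p}) \<union> TP" using cl pm TP_def by auto
    have "p = card {..<p}" by simp
    also have "\<dots> \<le> card ((Pos - {p}) \<union> TP)" using sub fP by (intro card_mono) (auto simp: TP_def)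
    also have "\<dots> \<le> card (Pos - {p}) + card TP" by (rule card_Un_le)
    also have "\<dots> \<le> (k i - 1) + c" using cTP cP pP fP by simp
    finally have "p \<le> k i - 1 + c" .
    moreover have "k i \<ge> 1" using cP pP fP by (metis card_0_eq empty_iff less_one not_le)
    ultimately show "p \<in> {..<c + k i}" by simp
  qed
  have lo: "(\<Sum>t<k i. s (c + k i - k i + t)) \<le> (\<Sum>j\<in>Pos. s j)"
    using lower_sum[OF sv fP PosB ck] cP by simp
  show ?thesis using up lo ut ivl_shift[of s c "k i"] c_def by simp
qed


lemma telescope: "(\<Sum>i<n. \<Sum>j\<in>{cpos k i..<cpos k i + k i}. f j) = (\<Sum>j<cpos k n. (f j :: real))"
proof (induction n)
  case 0 then show ?case by (simp add: cpos_def)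
next
  case (Suc n)
  have "(\<Sum>j<cpos k n. f j) + (\<Sum>j\<in>{cpos k n..<cpos k n + k n}. f j) = (\<Sum>j<cpos k n + k n. f j)"
    using sum.atLeastLessThan_concat[of 0 "cpos k n" "cpos k n + k n" f] by (simp add: atLeast0LessThan)
  then show ?case using Suc by (simp add: cpos_Suc)
qed

theorem mainTheorem8:
  fixes n m :: nat and s :: "nat \<Rightarrow> real" and k :: "nat \<Rightarrow> nat" and P :: "nat \<Rightarrow> nat list"
  assumes "n \<ge> 1"
    and "scoring_vector m s"
    and "\<forall>j<m. s j > 0"
    and "(\<Sum>i<n. k i) = m"
    and "valid_profile n m P"
  shows "price_AtoP SW_u n s P k \<le>
           (\<Sum>i<n. \<Sum>j<k i. s j) / (\<Sum>j<m. s j)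
    \<and> price_AtoP SW_e n s P k \<le>
           (\<Sum>j< Min (k ` {..<n}). s j) /
           Min ((\<lambda>i. \<Sum>j\<in>{cpos k i..<cpos k i + k i}. s j) ` {..<n})
    \<and> price_AtoP SW_n n s P k \<le>
           (\<Prod>i<n. \<Sum>j<k i. s j) /
           (\<Prod>i<n. \<Sum>j\<in>{cpos k i..<cpos k i + k i}. s j)"
proof -
  note sv = assms(2) and spos = assms(3) and sk = assms(4)
  define Ls where "Ls i = (\<Sum>j\<in>{cpos k i..<cpos k i + k i}. s j)" for i
  define Us where "Us i = (\<Sum>j<k i. s j)" for i
  have ckm: "cpos k i + k i \<le> m" if "i < n" for i
    using cpos_le[of "Suc i" n k] that sk by (simp add: cpos_Suc cpos_def)
  have Lnn: "0 \<le> Ls i" if "i < n" for i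
    unfolding Ls_def using ckm[OF that] spos by (intro sum_nonneg) (auto intro: less_imp_le)
  have L0: "k i = 0" if "i < n" "Ls i = 0" for i
  proof (rule ccontr)
    assume "k i \<noteq> 0"
    then have "0 < Ls i" unfolding Ls_def using ckm[OF that(1)] spos
      by (intro sum_pos) auto
    then show False using that by simp
  qed
  have vpi: "valid_profile n m (P \<circ> \<pi>)" if "\<pi> permutes {..<n}" for \<pi>
    using assms(5) that unfolding valid_profile_def
    by (metis comp_apply lessThan_iff permutes_in_image)
  have AB: "Ls i \<le> util s (P \<circ> \<pi>) k i \<and> util s (P \<circ> \<pi>) k i \<le> Us i"
    if "\<pi> permutes {..<n}" "i < n" for \<pi> i
    using agent_bounds[OF vpi[OF that(1)] sk sv that(2)] Ls_def Us_def by simp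
  have fin: "finite {SW n s (P \<circ> \<pi>) k | \<pi>. \<pi> permutes {..<n}}" for SW
  proof -
    have "{SW n s (P \<circ> \<pi>) k | \<pi>. \<pi> permutes {..<n}} = (\<lambda>\<pi>. SW n s (P \<circ> \<pi>) k) ` {\<pi>. \<pi> permutes {..<n}}"
      by auto
    then show ?thesis using finite_permutations[of "{..<n}"] by simp
  qed
  have ne: "{SW n s (P \<circ> \<pi>) k | \<pi>. \<pi> permutes {..<n}} \<noteq> {}" for SW
    using permutes_id by blast
  have ratio': "price_AtoP SW n s P k \<le> U / L"
    if "\<And>\<pi>. \<pi> permutes {..<n} \<Longrightarrow> L \<le> SW n s (P \<circ> \<pi>) k \<and> SW n s (P \<circ> \<pi>) k \<le> U"
       "0 \<le> L" "L = 0 \<longrightarrow> U \<le> 0" for SW L U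
    unfolding price_AtoP_def
    by (rule ratio[OF fin ne]) (use that in blast)+
  have u: "price_AtoP SW_u n s P k \<le> (\<Sum>i<n. Us i) / (\<Sum>i<n. Ls i)"
  proof (rule ratio')
    fix \<pi> assume p: "\<pi> permutes {..<n}"
    show "(\<Sum>i<n. Ls i) \<le> SW_u n s (P \<circ> \<pi>) k \<and> SW_u n s (P \<circ> \<pi>) k \<le> (\<Sum>i<n. Us i)"
      unfolding SW_u_def using AB[OF p] by (auto intro: sum_mono)
  next
    show "0 \<le> (\<Sum>i<n. Ls i)" using Lnn by (intro sum_nonneg) auto
    show "(\<Sum>i<n. Ls i) = 0 \<longrightarrow> (\<Sum>i<n. Us i) \<le> 0"
    proof
      assume "(\<Sum>i<n. Ls i) = 0"
      then have "\<forall>i<n. Ls i = 0" using Lnn sum_nonneg_eq_0_iff[of "{..<n}" Ls] by auto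
      then show "(\<Sum>i<n. Us i) \<le> 0" using L0 Us_def by simp
    qed
  qed
  have nne: "{..<n} \<noteq> {}" using assms(1) by (metis lessThan_iff less_le_trans empty_iff zero_less_one)
  have sm: "(\<Sum>i<n. Ls i) = (\<Sum>j<m. s j)"
    unfolding Ls_def telescope using sk by (simp add: cpos_def)
  define Le where "Le = Min (Ls ` {..<n})"
  have "Min (k ` {..<n}) \<in> k ` {..<n}" using nne by (intro Min_in) auto
  then obtain i0 where i0: "i0 < n" "k i0 = Min (k ` {..<n})" by auto
  have Lein: "Le \<in> Ls ` {..<n}" unfolding Le_def using nne by (intro Min_in) auto
  have e: "price_AtoP SW_e n s P k \<le> Us i0 / Le"
  proof (rule ratio')
    fix \<pi> assume p: "\<pi> permutes {..<n}"
    have "Le \<le> SW_e n s (P \<circ> \<pi>) k" unfolding SW_e_def Le_def using nne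
      by (subst Min_ge_iff) (auto intro: order_trans[OF _ conjunct1[OF AB[OF p]]])
    moreover have "SW_e n s (P \<circ> \<pi>) k \<le> Us i0" unfolding SW_e_def
      using i0 AB[OF p i0(1)] by (meson Min_le finite_imageI finite_lessThan image_eqI lessThan_iff order_trans)
    ultimately show "Le \<le> SW_e n s (P \<circ> \<pi>) k \<and> SW_e n s (P \<circ> \<pi>) k \<le> Us i0" by simp
  next
    show "0 \<le> Le" using Lein Lnn by auto
    show "Le = 0 \<longrightarrow> Us i0 \<le> 0"
    proof
      assume "Le = 0"
      then obtain i where "i < n" "Ls i = 0" using Lein by auto
      then have "k i = 0" using L0 by simp
      then have "k i0 = 0" using i0 \<open>i < n\<close> by (metis Min_le finite_imageI finite_lessThan image_eqI le_zero_eq lessThan_iff)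
      then show "Us i0 \<le> 0" using Us_def by simp
    qed
  qed
  have nn: "price_AtoP SW_n n s P k \<le> (\<Prod>i<n. Us i) / (\<Prod>i<n. Ls i)"
  proof (rule ratio')
    fix \<pi> assume p: "\<pi> permutes {..<n}"
    show "(\<Prod>i<n. Ls i) \<le> SW_n n s (P \<circ> \<pi>) k \<and> SW_n n s (P \<circ> \<pi>) k \<le> (\<Prod>i<n. Us i)"
      unfolding SW_n_def using AB[OF p] Lnn
      by (auto intro!: prod_mono intro: order_trans)
  next
    show "0 \<le> (\<Prod>i<n. Ls i)" using Lnn by (intro prod_nonneg) auto
    show "(\<Prod>i<n. Ls i) = 0 \<longrightarrow> (\<Prod>i<n. Us i) \<le> 0"
    proof
      assume "(\<Prod>i<n. Ls i) = 0"
      then obtain i where "i < n" "Ls i = 0" by auto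
      then have "Us i = 0" using L0 Us_def by simp
      then have "(\<Prod>i<n. Us i) = 0" using \<open>i < n\<close> by (intro prod_zero) auto
      then show "(\<Prod>i<n. Us i) \<le> 0" by (rule eq_refl)
    qed
  qed
  have "Us i0 = (\<Sum>j< Min (k ` {..<n}). s j)" using Us_def i0 by simp
  moreover have "Le = Min ((\<lambda>i. \<Sum>j\<in>{cpos k i..<cpos k i + k i}. s j) ` {..<n})"
    using Le_def Ls_def by simp
  ultimately show ?thesis using u e nn sm unfolding Us_def Ls_def by simp
qed

end
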